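(* Let $p$ be a prime and let $n=n_1n_2$ with $n_1,n_2\ge 1$ integers, and assume $n$ is not prime. Let $\mathbb{F}_{p^n}$ be represented as a tower $\mathbb{F}_{(p^{n_1})^{n_2}}=\mathbb{F}_{p^{n_1}}[x]/(\psi(x))$, where $\psi\in\mathbb{F}_{p^{n_1}}[x]$ is monic irreducible of degree $n_2$, and let $\rho:\mathbb{F}_{p^{n_1}}[x]\to\mathbb{F}_{p^n}$ be reduction modulo $\psi$. Let $d$ be the largest divisor of $n$ with $1<d<n$, and let $\mathbb{F}_{p^d}\subset\mathbb{F}_{p^n}$ be the unique subfield with $p^d$ elements. Let $T\in\mathbb{F}_{p^n}^*$ be an element not lying in any proper subfield of $\mathbb{F}_{p^n}$, represented by a polynomial of degree larger than $n_2-d/n_1$. Then there exist a nonzero $u\in\mathbb{F}_{p^d}$ and a nonzero polynomial $P\in\mathbb{F}_{p^{n_1}}[x]$ of degree at most $n_2-\lceil d/n_1\rceil$ such that $\rho(P)=uT$. Consequently, for every generator $g$ of $\mathbb{F}_{p^n}^*$, $$\log_g\rho(P)\equiv\log_g T \pmod{\Phi_n(p)}.$$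
   Context: $\Phi_n$ denotes the $n$-th cyclotomic polynomial. For a generator $g$ of the cyclic group $\mathbb{F}_{p^n}^*$, $\log_g z$ denotes the discrete logarithm of $z\in\mathbb{F}_{p^n}^*$, an integer defined modulo $p^n-1$; since $\Phi_n(p)$ divides $p^n-1$, congruences of discrete logarithms modulo $\Phi_n(p)$ are well defined. Elements of $\mathbb{F}_{p^n}$ are represented by their unique representative polynomial of degree $<n_2$ in $\mathbb{F}_{p^{n_1}}[x]$. *)

theory Defs
  imports "HOL-Analysis.Analysis" "HOL-Computational_Algebra.Computational_Algebra"
begin

definition cyclotomic_poly :: "nat \<Rightarrow> complex poly" where
  "cyclotomic_poly n = (\<Prod>k\<in>{k. k < n \<and> coprime k n}. [:- cis (2 * pi * real k / real n), 1:])"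

text \<open>The field F_q[x]/(psi), with elements represented by their unique representative
  polynomial of degree less than deg psi.\<close>
definition tower_carrier :: "'a::field poly \<Rightarrow> 'a poly set" where
  "tower_carrier \<psi> = {q. degree q < degree \<psi>}"

definition is_subfield :: "'a::field poly \<Rightarrow> 'a poly set \<Rightarrow> bool" where
  "is_subfield \<psi> K \<longleftrightarrow> K \<subseteq> tower_carrier \<psi> \<and> 0 \<in> K \<and> 1 \<in> K \<and>
     (\<forall>a\<in>K. \<forall>b\<in>K. a + b \<in> K \<and> (a * b) mod \<psi> \<in> K) \<and>
     (\<forall>a\<in>K. - a \<in> K) \<and>
     (\<forall>a\<in>K. a \<noteq> 0 \<longrightarrow> (\<exists>c\<in>K. (a * c) mod \<psi> = 1))"

definition is_generator :: "'a::field poly \<Rightarrow> 'a poly \<Rightarrow> bool" where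
  "is_generator \<psi> g \<longleftrightarrow> g \<in> tower_carrier \<psi> \<and> g \<noteq> 0 \<and>
     (\<forall>z\<in>tower_carrier \<psi>. z \<noteq> 0 \<longrightarrow> (\<exists>k::nat. g ^ k mod \<psi> = z))"

definition dlog :: "'a::field poly \<Rightarrow> 'a poly \<Rightarrow> 'a poly \<Rightarrow> nat" where
  "dlog \<psi> g z = (LEAST k::nat. g ^ k mod \<psi> = z)"

end

theory Submission imports Defs "HOL-Number_Theory.Cong" begin

definition intpoly :: "complex poly \<Rightarrow> bool" where
  "intpoly P \<longleftrightarrow> (\<forall>i. coeff P i \<in> \<int>)"

lemma intpoly_mult: "intpoly A \<Longrightarrow> intpoly B \<Longrightarrow> intpoly (A * B)"
  unfolding intpoly_def coeff_mult by (auto intro!: Ints_sum Ints_mult)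

lemma intpoly_prod: "(\<And>x. x \<in> S \<Longrightarrow> intpoly (f x)) \<Longrightarrow> intpoly (\<Prod>x\<in>S. f x)"
proof (induction S rule: infinite_finite_induct)
  case (infinite A) then show ?case by (simp add: intpoly_def coeff_1)
next
  case empty then show ?case by (simp add: intpoly_def coeff_1)
next
  case (insert x F) then show ?case by (simp add: intpoly_mult)
qed

lemma intpoly_diff: "intpoly A \<Longrightarrow> intpoly B \<Longrightarrow> intpoly (A - B)"
  unfolding intpoly_def by (auto intro!: Ints_diff)

lemma intpoly_add: "intpoly A \<Longrightarrow> intpoly B \<Longrightarrow> intpoly (A + B)"
  unfolding intpoly_def by (auto intro!: Ints_add)

lemma intpoly_monom: "c \<in> \<int> \<Longrightarrow> intpoly (monom c k)"
  unfolding intpoly_def by (auto simp: coeff_monom)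

lemma intpoly_xn: "intpoly (monom 1 m - 1)"
  by (intro intpoly_diff intpoly_monom) (auto simp: intpoly_def coeff_1)

lemma intpoly_div_monic:
  assumes "lead_coeff B = 1" "intpoly B"
  shows "intpoly (B * C) \<Longrightarrow> intpoly C"
proof (induction "degree C" arbitrary: C rule: less_induct)
  case (less C)
  show ?case
  proof (cases "C = 0")
    case True then show ?thesis by (simp add: intpoly_def)
  next
    case False
    have B0: "B \<noteq> 0" using assms by auto
    have "coeff (B*C) (degree B + degree C) = lead_coeff C"
      using coeff_mult_degree_sum[of B C] assms by simp
    hence lc: "lead_coeff C \<in> \<int>" using less.prems unfolding intpoly_def by metis
    define C' where "C' = C - monom (lead_coeff C) (degree C)"
    have "B * C' = B*C - B * monom (lead_coeff C) (degree C)" by (simp add: C'_def algebra_simps)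
    hence "intpoly (B*C')" using less.prems lc assms
      by (auto intro!: intpoly_diff intpoly_mult intpoly_monom)
    moreover have "C' = 0 \<or> degree C' < degree C"
    proof (cases "C' = 0")
      case False
      have "coeff C' i = 0" if "i \<ge> degree C" for i
        using that by (cases "i = degree C") (auto simp: C'_def coeff_monom coeff_eq_0)
      hence "\<not> degree C' \<ge> degree C" using False
        by (metis leading_coeff_0_iff)
      then show ?thesis by simp
    qed simp
    ultimately have "intpoly C'"
      by (metis less.hyps intpoly_def coeff_0 Ints_0)
    then show ?thesis using lc
      by (metis C'_def diff_add_cancel intpoly_add intpoly_monom)
  qed
qed

lemma prod_roots_dvd:
  fixes S :: "complex set"
  assumes "finite S"
  shows "f \<noteq> 0 \<Longrightarrow> (\<forall>z\<in>S. poly f z = 0) \<Longrightarrow> (\<Prod>z\<in>S. [:-z,1:]) dvd f"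
  using assms
proof (induction S arbitrary: f rule: finite_induct)
  case empty then show ?case by simp
next
  case (insert a S)
  have "[:-a,1:] dvd f" using insert.prems poly_eq_0_iff_dvd by blast
  then obtain g where g: "f = [:-a,1:] * g" by (elim dvdE)
  have "g \<noteq> 0" using g insert.prems by auto
  moreover have "\<forall>z\<in>S. poly g z = 0"
  proof
    fix z assume "z \<in> S"
    hence "z \<noteq> a" "poly f z = 0" using insert by auto
    thus "poly g z = 0" using g by auto
  qed
  ultimately have "(\<Prod>z\<in>S. [:-z,1:]) dvd g" using insert.IH by blast
  moreover have "(\<Prod>z\<in>insert a S. [:-z,1:]) = [:-a,1:] * (\<Prod>z\<in>S. [:-z,1:])"
    using insert.hyps by simp
  ultimately show ?case using g by (metis dvd_refl mult_dvd_mono)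
qed

lemma xn_minus_1_prod:
  assumes m: "m > 0"
  shows "(\<Prod>k<m. [:- cis (2 * pi * real k / real m), 1:]) = (monom 1 m - 1 :: complex poly)"
proof -
  let ?f = "\<lambda>k::nat. cis (2 * pi * real k / real m)"
  define X :: "complex poly" where "X = monom 1 m - 1"
  define R where "R = {z::complex. z ^ m = 1}"
  have fin: "finite R" unfolding R_def using m by (intro finite_roots_unity) simp
  have "(\<Prod>k<m. [:- ?f k, 1:]) = (\<Prod>z\<in>R. [:-z,1:])"
    unfolding R_def using Complex.bij_betw_roots_unity[OF m]
    by (rule prod.reindex_bij_betw)
  note reidx = this
  have cR: "card R = m" unfolding R_def using card_roots_unity_eq[OF m] .
  define P where "P = (\<Prod>z\<in>R. [:-z,1:] :: complex poly)"
  have X0: "X \<noteq> 0"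
  proof
    assume "X = 0" hence "poly X 0 = 0" by simp
    thus False using m by (simp add: X_def poly_monom power_0_left)
  qed
  have "P dvd X" unfolding P_def
    by (rule prod_roots_dvd[OF fin X0]) (auto simp: X_def R_def poly_monom)
  then obtain q where q: "X = P * q" by (elim dvdE)
  have degP: "degree P = m" unfolding P_def
    by (subst degree_prod_sum_eq) (auto simp: cR)
  have lP: "lead_coeff P = 1" unfolding P_def by (simp add: lead_coeff_prod)
  have cX: "coeff X i = (if i = m then 1 else if i = 0 then -1 else 0)" for i
    using m by (auto simp: X_def coeff_monom)
  have degX: "degree X = m"
  proof (rule antisym)
    show "degree X \<le> m" by (rule degree_le) (auto simp: cX)
    show "m \<le> degree X" by (rule le_degree) (simp add: cX)
  qed
  have lX: "lead_coeff X = 1" using degX cX by simp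
  have "P \<noteq> 0" "q \<noteq> 0" using q X0 by auto
  hence "degree q = 0" using q degX degP degree_mult_eq by fastforce
  moreover have "lead_coeff q = 1" using q lX lP by (simp add: lead_coeff_mult)
  ultimately have "q = 1" by (metis degree_0_id one_pCons)
  thus ?thesis using q P_def X_def reidx by simp
qed

lemma cyc_bij:
  fixes m :: nat assumes m: "m > 0"
  shows "bij_betw (\<lambda>(e,j). j * (m div e)) (SIGMA e:{e. e dvd m}. {j. j < e \<and> coprime j e}) {..<m}"
proof (rule bij_betw_byWitness[where f' = "\<lambda>k. (m div gcd k m, k div gcd k m)"])
  have A: "m div gcd (j * (m div e)) m = e \<and> j * (m div e) div gcd (j * (m div e)) m = j \<and> j * (m div e) < m"
    if e: "e dvd m" and j: "j < e" "coprime j e" for e j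
  proof -
    obtain c where mc: "m = e * c" using e by (elim dvdE)
    have c0: "c > 0" using m mc by (cases c) auto
    have e0: "e > 0" using m mc by (cases e) auto
    have cd: "m div e = c" using mc e0 by simp
    have "gcd j e = 1" using j by simp
    hence "gcd (j*c) (e*c) = c" by (metis gcd_mult_distrib_nat mult.commute mult.right_neutral)
    hence g: "gcd (j*c) m = c" using mc by simp
    have 1: "m div c = e" using mc c0 by simp
    have 2: "j * c div c = j" using c0 by simp
    have 3: "j * c < m" using mc j(1) c0 by simp
    show ?thesis unfolding cd g using 1 2 3 by blast
  qed
  show "\<forall>a\<in>(SIGMA e:{e. e dvd m}. {j. j < e \<and> coprime j e}).
          (\<lambda>k. (m div gcd k m, k div gcd k m)) ((\<lambda>(e,j). j * (m div e)) a) = a"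
    using A by auto
  show "(\<lambda>(e,j). j * (m div e)) ` (SIGMA e:{e. e dvd m}. {j. j < e \<and> coprime j e}) \<subseteq> {..<m}"
    using A by auto
  have B: "m div gcd k m dvd m \<and> coprime (k div gcd k m) (m div gcd k m) \<and> k div gcd k m < m div gcd k m
           \<and> k div gcd k m * (m div (m div gcd k m)) = k"
    if k: "k < m" for k
  proof -
    define g where "g = gcd k m"
    obtain a where a: "m = g * a" unfolding g_def by (metis gcd_dvd2 dvdE)
    obtain b where b: "k = g * b" unfolding g_def by (metis gcd_dvd1 dvdE)
    have g0: "g > 0" using m g_def by simp
    have 1: "m div g = a" "k div g = b" using a b g0 by simp_all
    have 2: "m div a = g" using a g0 m by (metis div_mult_self1_is_m mult.commute mult_is_0 neq0_conv)
    have 3: "coprime (k div g) (m div g)" unfolding g_def using m by (intro div_gcd_coprime) auto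
    have 4: "b < a" using k a b g0 by simp
    have 5: "coprime b a" using 3 unfolding 1 .
    show ?thesis unfolding g_def[symmetric] 1 2 using 5 4 a b
      by (simp add: 1)
  qed
  show "\<forall>a'\<in>{..<m}. (\<lambda>(e,j). j * (m div e)) ((\<lambda>k. (m div gcd k m, k div gcd k m)) a') = a'"
    using B by auto
  show "(\<lambda>k. (m div gcd k m, k div gcd k m)) ` {..<m} \<subseteq> (SIGMA e:{e. e dvd m}. {j. j < e \<and> coprime j e})"
    using B by auto
qed

lemma cyc_decomp:
  fixes m :: nat assumes m: "m > 0"
  shows "(\<Prod>k<m. [:- cis (2 * pi * real k / real m), 1:]) = (\<Prod>e\<in>{e. e dvd m}. cyclotomic_poly e)"
proof -
  have finD: "finite {e. e dvd m}" using m by simp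
  have "(\<Prod>e\<in>{e. e dvd m}. cyclotomic_poly e) =
        (\<Prod>e\<in>{e. e dvd m}. \<Prod>j\<in>{j. j < e \<and> coprime j e}. [:- cis (2 * pi * real j / real e), 1:])"
    unfolding cyclotomic_poly_def by simp
  also have "\<dots> = (\<Prod>(e,j)\<in>(SIGMA e:{e. e dvd m}. {j. j < e \<and> coprime j e}). [:- cis (2 * pi * real j / real e), 1:])"
    by (rule prod.Sigma) (use finD in auto)
  also have "\<dots> = (\<Prod>(e,j)\<in>(SIGMA e:{e. e dvd m}. {j. j < e \<and> coprime j e}).
        [:- cis (2 * pi * real (j * (m div e)) / real m), 1:])"
  proof (rule prod.cong[OF refl], clarify)
    fix e j assume e: "e dvd m"
    define c where "c = m div e"
    have mc: "m = e * c" using e c_def by simp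
    have c0: "c > 0" using m mc by (cases c) auto
    have "2 * pi * real (j * (m div e)) / real m = 2 * pi * real j / real e"
      using c0 unfolding c_def[symmetric] by (simp add: mc field_simps)
    thus "[:- cis (2 * pi * real j / real e), 1:] = [:- cis (2 * pi * real (j * (m div e)) / real m), 1:]"
      by simp
  qed
  also have "\<dots> = (\<Prod>k<m. [:- cis (2 * pi * real k / real m), 1:])"
    using prod.reindex_bij_betw[OF cyc_bij[OF m], of "\<lambda>k. [:- cis (2 * pi * real k / real m), 1:]"]
    by (simp add: case_prod_unfold)
  finally show ?thesis by simp
qed

lemma cyc_monic: "lead_coeff (cyclotomic_poly m) = 1"
  unfolding cyclotomic_poly_def by (simp add: lead_coeff_prod)

lemma cyc_int: "m > 0 \<Longrightarrow> intpoly (cyclotomic_poly m)"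
proof (induction m rule: less_induct)
  case (less m)
  define Q where "Q = (\<Prod>e\<in>{e. e dvd m} - {m}. cyclotomic_poly e)"
  have "monom 1 m - 1 = (\<Prod>e\<in>{e. e dvd m}. cyclotomic_poly e)"
    using xn_minus_1_prod[OF less.prems] cyc_decomp[OF less.prems] by simp
  also have "\<dots> = cyclotomic_poly m * Q" unfolding Q_def
    using less.prems by (subst prod.remove[of _ m]) auto
  finally have eq: "monom 1 m - 1 = Q * cyclotomic_poly m" by simp
  have "intpoly Q" unfolding Q_def
  proof (rule intpoly_prod)
    fix e assume "e \<in> {e. e dvd m} - {m}"
    hence "e dvd m" "e \<noteq> m" by auto
    hence "e < m" "e > 0" using less.prems dvd_imp_le[of e m] by (auto intro: Nat.gr0I)
    thus "intpoly (cyclotomic_poly e)" using less.IH by blast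
  qed
  moreover have "lead_coeff Q = 1" unfolding Q_def by (simp add: lead_coeff_prod cyc_monic)
  ultimately show ?case using intpoly_div_monic[of Q "cyclotomic_poly m"] eq intpoly_xn by metis
qed

lemma intpoly_eval: "intpoly R \<Longrightarrow> poly R (of_nat p) \<in> \<int>"
  unfolding intpoly_def poly_altdef by (auto intro!: Ints_sum Ints_mult Ints_power)

lemma cyc_eval:
  fixes n d p :: nat
  assumes "d dvd n" "0 < d" "d < n"
  shows "\<exists>r\<in>\<int>. (of_nat p ^ n - 1 :: complex) = (of_nat p ^ d - 1) * (poly (cyclotomic_poly n) (of_nat p) * r)"
proof -
  have n0: "n > 0" using assms by simp
  define R where "R = (\<Prod>e\<in>({e. e dvd n} - {n}) - {e. e dvd d}. cyclotomic_poly e)"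
  have sub: "{e. e dvd d} \<subseteq> {e. e dvd n} - {n}" using assms dvd_imp_le[of _ d] by (auto intro: dvd_trans)
  have "monom 1 n - 1 = (\<Prod>e\<in>{e. e dvd n}. cyclotomic_poly e)"
    using xn_minus_1_prod[OF n0] cyc_decomp[OF n0] by simp
  also have "\<dots> = cyclotomic_poly n * (\<Prod>e\<in>{e. e dvd n} - {n}. cyclotomic_poly e)"
    using n0 by (subst prod.remove[of _ n]) auto
  also have "(\<Prod>e\<in>{e. e dvd n} - {n}. cyclotomic_poly e) = R * (\<Prod>e\<in>{e. e dvd d}. cyclotomic_poly e)"
    unfolding R_def using n0 by (intro prod.subset_diff sub) auto
  also have "(\<Prod>e\<in>{e. e dvd d}. cyclotomic_poly e) = monom 1 d - 1"
    using xn_minus_1_prod[of d] cyc_decomp[of d] assms by simp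
  finally have eq: "monom 1 n - 1 = cyclotomic_poly n * (R * (monom 1 d - 1))" .
  have "intpoly R" unfolding R_def by (rule intpoly_prod) (auto intro!: cyc_int Nat.gr0I)
  hence "poly R (of_nat p) \<in> \<int>" by (rule intpoly_eval)
  moreover have "(of_nat p ^ n - 1 :: complex) = (of_nat p ^ d - 1) * (poly (cyclotomic_poly n) (of_nat p) * poly R (of_nat p))"
    using arg_cong[OF eq, of "\<lambda>P. poly P (of_nat p)"] by (simp add: poly_monom algebra_simps)
  ultimately show ?thesis by blast
qed


lemma not_dvd_prod:
  assumes "prime_elem q" "finite A" "\<forall>x\<in>A. \<not> q dvd f x"
  shows "\<not> q dvd prod f A"
  using assms(2,3)
proof (induction A rule: finite_induct)
  case empty then show ?case using prime_elem_not_unit[OF assms(1)] by simp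
next
  case (insert x F) then show ?case using assms(1) by (simp add: prime_elem_dvd_mult_iff)
qed

locale twr =
  fixes \<psi> :: "'a::field poly"
  assumes irr: "irreducible \<psi>" and degpos: "degree \<psi> > 0"
begin

abbreviation "C \<equiv> tower_carrier \<psi>"

lemma prime: "prime_elem \<psi>" using irr by (rule field_poly_irreducible_imp_prime)

lemma psi0: "\<psi> \<noteq> 0" using degpos by auto

lemma not_dvd: "a \<in> C \<Longrightarrow> a \<noteq> 0 \<Longrightarrow> \<not> \<psi> dvd a"
proof
  assume "a \<in> C" "a \<noteq> 0" "\<psi> dvd a"
  hence "degree \<psi> \<le> degree a" "degree a < degree \<psi>" using dvd_imp_degree_le[of \<psi> a] by (auto simp: tower_carrier_def)
  thus False by simp
qed

lemma mod_in: "a mod \<psi> \<in> C"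
  unfolding tower_carrier_def using degree_mod_less[OF psi0, of a] degpos by auto

lemma mod_id: "a \<in> C \<Longrightarrow> a mod \<psi> = a"
  unfolding tower_carrier_def by (simp add: mod_poly_less)

lemma one_mod: "1 mod \<psi> = 1" using degpos by (simp add: mod_poly_less)

lemma zero_in: "0 \<in> C" and one_in: "1 \<in> C" using degpos by (auto simp: tower_carrier_def)

lemma mod_0_iff: "a mod \<psi> = 0 \<longleftrightarrow> \<psi> dvd a" by (simp add: mod_eq_0_iff_dvd)

lemma not_dvd_mult: "\<not> \<psi> dvd a \<Longrightarrow> \<not> \<psi> dvd b \<Longrightarrow> \<not> \<psi> dvd (a*b)"
  using prime prime_elem_dvd_mult_iff by blast

lemma not_dvd_power: "\<not> \<psi> dvd a \<Longrightarrow> \<not> \<psi> dvd (a^k)"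
proof (induction k)
  case 0 then show ?case using prime_elem_not_unit[OF prime] by simp
next
  case (Suc k) then show ?case using not_dvd_mult by simp
qed

lemma cancel:
  assumes "u \<in> C" "u \<noteq> 0" "x \<in> C" "y \<in> C" "(u*x) mod \<psi> = (u*y) mod \<psi>"
  shows "x = y"
proof -
  have "\<psi> dvd u*x - u*y" using assms(5) by (simp add: mod_eq_dvd_iff)
  hence "\<psi> dvd u*(x-y)" by (simp add: algebra_simps)
  hence "\<psi> dvd x - y" using not_dvd[OF assms(1,2)] prime prime_elem_dvd_mult_iff by blast
  moreover have "degree (x - y) < degree \<psi>"
  proof (rule order.strict_trans1[OF degree_diff_le_max])
    show "max (degree x) (degree y) < degree \<psi>" using assms(3,4) by (simp add: tower_carrier_def)
  qed
  ultimately have "x - y = 0" using dvd_imp_degree_le[of \<psi> "x - y"] by (metis leD)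
  thus ?thesis by simp
qed

lemma lagrange:
  assumes S: "S \<subseteq> C" "finite S" "0 \<in> S" "\<forall>a\<in>S. \<forall>b\<in>S. (a*b) mod \<psi> \<in> S"
    and u: "u \<in> S" "u \<noteq> 0"
  shows "u ^ (card S - 1) mod \<psi> = 1"
proof -
  define S' where "S' = S - {0}"
  define f where "f x = (u*x) mod \<psi>" for x
  have finS': "finite S'" using S unfolding S'_def by auto
  have uC: "u \<in> C" using u S by auto
  have nd: "\<not> \<psi> dvd x" if "x \<in> S'" for x
  proof -
    have "x \<in> C" "x \<noteq> 0" using that S(1) unfolding S'_def by auto
    thus ?thesis by (rule not_dvd)
  qed
  have sub: "f ` S' \<subseteq> S'"
  proof
    fix y assume "y \<in> f ` S'"
    then obtain x where x: "x \<in> S'" "y = f x" by auto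
    have "x \<in> S" using x(1) unfolding S'_def by blast
    hence "y \<in> S" using x(2) S(4) u(1) unfolding f_def by blast
    moreover have "y \<noteq> 0" using x nd[OF x(1)] not_dvd_mult not_dvd[OF uC u(2)]
      unfolding f_def by (simp add: mod_0_iff)
    ultimately show "y \<in> S'" unfolding S'_def by auto
  qed
  have inj: "inj_on f S'"
  proof (rule inj_onI)
    fix x y assume "x \<in> S'" "y \<in> S'" "f x = f y"
    hence "x \<in> C" "y \<in> C" "(u*x) mod \<psi> = (u*y) mod \<psi>" using S unfolding f_def S'_def by auto
    thus "x = y" using cancel[OF uC u(2)] by blast
  qed
  have img: "f ` S' = S'" by (rule endo_inj_surj[OF finS' sub inj])
  define PP where "PP = prod (\<lambda>x. x) S'"
  have "PP = prod (\<lambda>x. x) (f ` S')" using img by (simp add: PP_def)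
  also have "\<dots> = prod f S'" using prod.reindex[OF inj, of "\<lambda>x. x"] by simp
  finally have "PP mod \<psi> = (prod (\<lambda>x. (u*x) mod \<psi>) S') mod \<psi>" unfolding f_def by simp
  also have "\<dots> = prod (\<lambda>x. u*x) S' mod \<psi>" by (rule mod_prod_eq)
  also have "prod (\<lambda>x. u*x) S' = u ^ card S' * PP" unfolding PP_def by (simp add: prod.distrib)
  finally have "(u ^ card S' * PP) mod \<psi> = PP mod \<psi>" by simp
  hence "\<psi> dvd u ^ card S' * PP - PP" by (simp only: mod_eq_dvd_iff)
  hence "\<psi> dvd (u ^ card S' - 1) * PP" by (simp add: algebra_simps)
  moreover have "\<not> \<psi> dvd PP" unfolding PP_def using not_dvd_prod[OF prime finS'] nd by auto
  ultimately have "\<psi> dvd u ^ card S' - 1" using prime prime_elem_dvd_mult_iff by blast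
  hence "u ^ card S' mod \<psi> = 1 mod \<psi>" by (simp add: mod_eq_dvd_iff)
  moreover have "card S' = card S - 1" unfolding S'_def using S by simp
  ultimately show ?thesis using one_mod by simp
qed

lemma card_C:
  assumes "finite (UNIV :: 'a set)"
  shows "card C = CARD('a) ^ degree \<psi>"
proof -
  let ?N = "degree \<psi>"
  let ?L = "{xs :: 'a list. set xs \<subseteq> UNIV \<and> length xs = ?N}"
  have "bij_betw (\<lambda>q. map (coeff q) [0..<?N]) C ?L"
  proof (rule bij_betw_byWitness[where f' = Poly])
    show "\<forall>q\<in>C. Poly (map (coeff q) [0..<?N]) = q"
    proof
      fix q assume q: "q \<in> C"
      show "Poly (map (coeff q) [0..<?N]) = q"
      proof (rule poly_eqI)
        fix i
        show "coeff (Poly (map (coeff q) [0..<?N])) i = coeff q i"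
          using q unfolding tower_carrier_def by (auto simp: nth_default_def coeff_eq_0)
      qed
    qed
    show "\<forall>xs\<in>?L. map (coeff (Poly xs)) [0..<?N] = xs"
      by (auto intro!: nth_equalityI simp: nth_default_def)
    show "(\<lambda>q. map (coeff q) [0..<?N]) ` C \<subseteq> ?L" by auto
    show "Poly ` ?L \<subseteq> C"
    proof
      fix q assume "q \<in> Poly ` ?L"
      then obtain xs where xs: "length xs = ?N" "q = Poly xs" by auto
      have "degree q \<le> ?N - 1"
        by (rule degree_le) (use xs degpos in \<open>auto simp: nth_default_def\<close>)
      thus "q \<in> C" using degpos unfolding tower_carrier_def by simp
    qed
  qed
  hence "card C = card ?L" by (rule bij_betw_same_card)
  also have "\<dots> = CARD('a) ^ ?N" using card_lists_length_eq[OF assms] by simp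
  finally show ?thesis .
qed


lemma finite_C: "finite (UNIV :: 'a set) \<Longrightarrow> finite C"
proof -
  assume f: "finite (UNIV :: 'a set)"
  have "CARD('a) > 0" using f by (simp add: finite_UNIV_card_ge_0)
  hence "card C > 0" using card_C[OF f] by simp
  thus ?thesis by (rule card_ge_0_finite)
qed

lemma C_closed: "\<forall>a\<in>C. \<forall>b\<in>C. (a*b) mod \<psi> \<in> C" using mod_in by blast

lemma card_C_nz: "finite (UNIV :: 'a set) \<Longrightarrow> card (C - {0}) = card C - 1"
  using finite_C zero_in by simp

lemma card_C_ge2: "finite (UNIV :: 'a set) \<Longrightarrow> card C \<ge> 2"
proof -
  assume f: "finite (UNIV :: 'a set)"
  have "{0, 1} \<subseteq> C" using zero_in one_in by auto
  hence "card {0::'a poly, 1} \<le> card C" using finite_C[OF f] by (intro card_mono)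
  thus ?thesis by simp
qed

lemma gen_facts:
  assumes f: "finite (UNIV :: 'a set)" and g: "is_generator \<psi> g"
  defines "N \<equiv> card C - 1"
  shows "N > 0"
    and "\<And>k. g ^ k mod \<psi> \<in> C - {0}"
    and "\<And>a b. g ^ a mod \<psi> = g ^ b mod \<psi> \<longleftrightarrow> a mod N = b mod N"
    and "\<And>z. z \<in> C \<Longrightarrow> z \<noteq> 0 \<Longrightarrow> g ^ (dlog \<psi> g z) mod \<psi> = z"
proof -
  show N0: "N > 0" using card_C_ge2[OF f] unfolding N_def by simp
  have gC: "g \<in> C" "g \<noteq> 0" using g unfolding is_generator_def by auto
  show eC: "g ^ k mod \<psi> \<in> C - {0}" for k
    using mod_in not_dvd_power[OF not_dvd[OF gC]] by (simp add: mod_0_iff)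
  have gN: "g ^ N mod \<psi> = 1"
    unfolding N_def by (rule lagrange[OF order_refl finite_C[OF f] zero_in C_closed gC])
  have per: "g ^ k mod \<psi> = g ^ (k mod N) mod \<psi>" for k
  proof -
    have "g ^ k = g ^ (N * (k div N) + k mod N)" by simp
    also have "\<dots> = (g ^ N) ^ (k div N) * g ^ (k mod N)"
      by (simp only: power_add power_mult)
    finally have e: "g ^ k = (g ^ N) ^ (k div N) * g ^ (k mod N)" .
    have "(g ^ N) ^ (k div N) mod \<psi> = ((g ^ N) mod \<psi>) ^ (k div N) mod \<psi>"
      by (simp only: power_mod)
    also have "\<dots> = 1" using gN one_mod by simp
    finally have h: "(g ^ N) ^ (k div N) mod \<psi> = 1" .
    have "g ^ k mod \<psi> = (((g ^ N) ^ (k div N)) mod \<psi>) * g ^ (k mod N) mod \<psi>"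
      unfolding e by (simp only: mod_mult_left_eq)
    thus ?thesis unfolding h by simp
  qed
  have img: "(\<lambda>k. g ^ k mod \<psi>) ` {..<N} = C - {0}"
  proof
    show "(\<lambda>k. g ^ k mod \<psi>) ` {..<N} \<subseteq> C - {0}" using eC by (simp add: image_subset_iff)
    show "C - {0} \<subseteq> (\<lambda>k. g ^ k mod \<psi>) ` {..<N}"
    proof
      fix z assume "z \<in> C - {0}"
      then obtain k where "g ^ k mod \<psi> = z" using g unfolding is_generator_def by auto
      hence "g ^ (k mod N) mod \<psi> = z" using per by simp
      moreover have "k mod N \<in> {..<N}" using N0 by simp
      ultimately show "z \<in> (\<lambda>k. g ^ k mod \<psi>) ` {..<N}" by blast
    qed
  qed
  have inj: "inj_on (\<lambda>k. g ^ k mod \<psi>) {..<N}"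
    by (rule eq_card_imp_inj_on) (use img card_C_nz[OF f] in \<open>simp_all add: N_def\<close>)
  show "g ^ a mod \<psi> = g ^ b mod \<psi> \<longleftrightarrow> a mod N = b mod N" for a b
  proof
    assume "g ^ a mod \<psi> = g ^ b mod \<psi>"
    hence "g ^ (a mod N) mod \<psi> = g ^ (b mod N) mod \<psi>" using per by metis
    thus "a mod N = b mod N" using inj_onD[OF inj] N0 by simp
  next
    assume "a mod N = b mod N"
    thus "g ^ a mod \<psi> = g ^ b mod \<psi>" using per by metis
  qed
  show "g ^ (dlog \<psi> g z) mod \<psi> = z" if zz: "z \<in> C" "z \<noteq> 0" for z
  proof -
    obtain k where "g ^ k mod \<psi> = z" using g zz unfolding is_generator_def by auto
    thus ?thesis unfolding dlog_def by (rule LeastI)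
  qed
qed
end

lemma arith_ceil:
  fixes n1 n2 d :: nat
  assumes "n1 \<ge> 1" "1 < d" "d < n1 * n2"
  defines "c \<equiv> nat \<lceil>real d / real n1\<rceil>"
  shows "1 \<le> c" "c \<le> n2" "n1 * (c - 1) < d" "int c = \<lceil>real d / real n1\<rceil>"
proof -
  have pos: "real d / real n1 > 0" using assms by simp
  hence cpos: "\<lceil>real d / real n1\<rceil> \<ge> 1" by (metis ceiling_le_zero not_le zero_less_one_class.zero_le_one int_one_le_iff_zero_less zero_less_ceiling)
  show ic: "int c = \<lceil>real d / real n1\<rceil>" unfolding c_def using cpos by simp
  have "int c \<ge> 1" using ic cpos by linarith
  thus "1 \<le> c" by simp
  have "real d < real n1 * real n2" using assms(3) by (metis of_nat_less_iff of_nat_mult)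
  hence "real d / real n1 \<le> real n2" using assms(1) by (simp add: divide_le_eq mult.commute)
  hence "\<lceil>real d / real n1\<rceil> \<le> int n2" by (simp add: ceiling_le_iff)
  thus "c \<le> n2" using ic by simp
  have "real_of_int \<lceil>real d / real n1\<rceil> - 1 < real d / real n1" using ceiling_correct[of "real d / real n1"] by linarith
  hence "(real c - 1) < real d / real n1" using ic by (metis of_int_of_nat_eq)
  hence "(real c - 1) * real n1 < real d" using assms(1) by (simp add: less_divide_eq)
  moreover have "real (c - 1) = real c - 1" using \<open>1 \<le> c\<close> by simp
  ultimately have "real (n1 * (c - 1)) < real d" by (simp add: mult.commute)
  thus "n1 * (c - 1) < d" by (simp only: of_nat_less_iff)
qed
theorem mainTheorem1:
  fixes p n n1 n2 d :: nat and \<psi> T :: "'a::{field,finite} poly"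
  assumes "prime p"
    and "CARD('a) = p ^ n1"
    and "n1 \<ge> 1" and "n2 \<ge> 1" and "n = n1 * n2" and "\<not> prime n"
    and "lead_coeff \<psi> = 1" and "irreducible \<psi>" and "degree \<psi> = n2"
    and "d dvd n" and "1 < d" and "d < n"
    and "\<forall>e. e dvd n \<and> 1 < e \<and> e < n \<longrightarrow> e \<le> d"
    and "T \<in> tower_carrier \<psi>" and "T \<noteq> 0"
    and "\<forall>K. is_subfield \<psi> K \<and> T \<in> K \<longrightarrow> K = tower_carrier \<psi>"
    and "real (degree T) > real n2 - real d / real n1"
  shows "\<forall>K. is_subfield \<psi> K \<and> card K = p ^ d \<longrightarrow>
           (\<exists>u\<in>K. u \<noteq> 0 \<and> (\<exists>P. P \<noteq> 0 \<and>
              int (degree P) \<le> int n2 - \<lceil>real d / real n1\<rceil> \<and>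
              P mod \<psi> = (u * T) mod \<psi> \<and>
              (\<forall>g. is_generator \<psi> g \<longrightarrow>
                 (of_int (int (dlog \<psi> g (P mod \<psi>)) - int (dlog \<psi> g T))
                    / poly (cyclotomic_poly n) (of_nat p) :: complex) \<in> \<int>)))"
proof (intro allI impI)
  fix K assume K: "is_subfield \<psi> K \<and> card K = p ^ d"
  interpret twr \<psi> by unfold_locales (use assms in auto)
  have fin: "finite (UNIV :: 'a set)" by simp
  have p2: "p \<ge> 2" using assms(1) by (simp add: prime_ge_2_nat)
  have KC: "K \<subseteq> C" and K0: "0 \<in> K" and Kcl: "\<forall>a\<in>K. \<forall>b\<in>K. (a*b) mod \<psi> \<in> K"
    and Kadd: "\<forall>a\<in>K. \<forall>b\<in>K. a + b \<in> K" and Kneg: "\<forall>a\<in>K. - a \<in> K"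
    using K unfolding is_subfield_def by auto
  have finK: "finite K" using KC finite_C[OF fin] finite_subset by blast
  have cardK: "card K = p ^ d" using K by simp
  have TC: "T \<in> C" "T \<noteq> 0" using assms by auto
  have dn: "d < n1 * n2" using assms by simp
  define c where "c = nat \<lceil>real d / real n1\<rceil>"
  have c1: "1 \<le> c" and c2: "c \<le> n2" and c3: "n1 * (c - 1) < d" and c4: "int c = \<lceil>real d / real n1\<rceil>"
    using arith_ceil[OF assms(3,11) dn] unfolding c_def by auto
  define L where "L = n2 - c"
  define h where "h u = map (\<lambda>i. coeff ((u*T) mod \<psi>) i) [Suc L..<n2]" for u
  define B where "B = {xs :: 'a list. set xs \<subseteq> UNIV \<and> length xs = c - 1}"
  have hB: "h ` K \<subseteq> B" unfolding h_def B_def L_def using c1 c2 by auto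
  have "card B = CARD('a) ^ (c - 1)" unfolding B_def using card_lists_length_eq[OF fin] by simp
  also have "\<dots> = p ^ (n1 * (c - 1))" using assms(2) by (simp add: power_mult)
  also have "\<dots> < p ^ d" using p2 c3 by (intro power_strict_increasing) auto
  finally have "card B < card K" using cardK by simp
  moreover have "finite B" unfolding B_def using finite_lists_length_eq[OF fin] by simp
  ultimately have "\<not> inj_on h K" using card_inj_on_le[OF _ hB] by (meson not_le)
  then obtain u1 u2 where u12: "u1 \<in> K" "u2 \<in> K" "u1 \<noteq> u2" "h u1 = h u2"
    unfolding inj_on_def by blast
  define u where "u = u1 + (- u2)"
  have uK: "u \<in> K" unfolding u_def using u12 Kadd Kneg by blast
  have u0: "u \<noteq> 0" unfolding u_def using u12 by (simp add: add_eq_0_iff2)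
  have uC: "u \<in> C" using uK KC by blast
  define P where "P = (u*T) mod \<psi>"
  have PC: "P \<in> C" unfolding P_def by (rule mod_in)
  have P0: "P \<noteq> 0" unfolding P_def mod_0_iff using not_dvd_mult[OF not_dvd[OF uC u0] not_dvd[OF TC]] .
  have u1C: "u1 \<in> C" "u2 \<in> C" using u12 KC by auto
  have Pdiff: "P = (u1*T) mod \<psi> - (u2*T) mod \<psi>"
  proof -
    have "(u1*T) mod \<psi> - (u2*T) mod \<psi> \<in> C"
    proof -
      have "degree ((u1*T) mod \<psi> - (u2*T) mod \<psi>) \<le> max (degree ((u1*T) mod \<psi>)) (degree ((u2*T) mod \<psi>))"
        by (rule degree_diff_le_max)
      moreover have "degree ((u1*T) mod \<psi>) < degree \<psi>" "degree ((u2*T) mod \<psi>) < degree \<psi>"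
        using mod_in[of "u1*T"] mod_in[of "u2*T"] by (auto simp: tower_carrier_def)
      ultimately show ?thesis unfolding tower_carrier_def by simp
    qed
    hence "(u1*T) mod \<psi> - (u2*T) mod \<psi> = ((u1*T) mod \<psi> - (u2*T) mod \<psi>) mod \<psi>"
      using mod_id by simp
    also have "\<dots> = (u1*T - u2*T) mod \<psi>" by (rule mod_diff_eq)
    also have "u1*T - u2*T = u*T" unfolding u_def by (simp add: algebra_simps)
    finally show ?thesis unfolding P_def by simp
  qed
  have coeffP: "coeff P i = 0" if "i > L" for i
  proof (cases "i < n2")
    case True
    have "i \<in> set [Suc L..<n2]" using True that by simp
    hence "coeff ((u1*T) mod \<psi>) i = coeff ((u2*T) mod \<psi>) i"
      using u12(4) unfolding h_def map_eq_conv by blast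
    thus ?thesis unfolding Pdiff by simp
  next
    case False
    hence "degree P < i" using PC assms(9) by (simp add: tower_carrier_def)
    thus ?thesis by (rule coeff_eq_0)
  qed
  have degP: "degree P \<le> L" by (rule degree_le) (use coeffP in auto)
  have degP': "int (degree P) \<le> int n2 - \<lceil>real d / real n1\<rceil>"
    using degP c2 c4 unfolding L_def by linarith
  have PmodP: "P mod \<psi> = (u*T) mod \<psi>" unfolding P_def by simp
  have PmodP2: "P mod \<psi> = P" using mod_id[OF PC] .
  show "\<exists>u\<in>K. u \<noteq> 0 \<and> (\<exists>P. P \<noteq> 0 \<and>
              int (degree P) \<le> int n2 - \<lceil>real d / real n1\<rceil> \<and>
              P mod \<psi> = (u * T) mod \<psi> \<and>
              (\<forall>g. is_generator \<psi> g \<longrightarrow>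
                 (of_int (int (dlog \<psi> g (P mod \<psi>)) - int (dlog \<psi> g T))
                    / poly (cyclotomic_poly n) (of_nat p) :: complex) \<in> \<int>))"
  proof (intro bexI[OF _ uK] conjI u0 exI[of _ P] P0 degP' PmodP allI impI)
    fix g assume g: "is_generator \<psi> g"
    define N where "N = card C - 1"
    note gf = gen_facts[OF fin g, folded N_def]
    have NC: "N = p ^ n - 1" unfolding N_def using card_C[OF fin] assms(2,5,9) by (simp add: power_mult)
    define a where "a = dlog \<psi> g u"
    define b where "b = dlog \<psi> g T"
    define z where "z = dlog \<psi> g (P mod \<psi>)"
    have ga: "g ^ a mod \<psi> = u" unfolding a_def using gf(4)[OF uC u0] .
    have gb: "g ^ b mod \<psi> = T" unfolding b_def using gf(4)[OF TC] .
    have gz: "g ^ z mod \<psi> = P" unfolding z_def PmodP2 using gf(4)[OF PC P0] .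
    have "g ^ (a + b) mod \<psi> = ((g ^ a mod \<psi>) * (g ^ b mod \<psi>)) mod \<psi>"
      by (simp add: power_add mod_mult_eq)
    also have "\<dots> = P" unfolding ga gb P_def ..
    finally have "z mod N = (a + b) mod N" using gz gf(3) by metis
    hence "[z = a + b] (mod N)" by (simp add: cong_def)
    hence "[a + b = z] (mod N)" by (rule cong_sym)
    hence "[int a + int b = int z] (mod int N)" using cong_int_iff[of "a+b" z N] by simp
    then obtain s where s0: "int z = int a + int b + int N * s" by (auto simp: cong_iff_lin)
    hence s: "int z - int b = int a + int N * s" by simp
    have "g ^ (a * (p ^ d - 1)) mod \<psi> = ((g ^ a mod \<psi>) ^ (p ^ d - 1)) mod \<psi>"
      by (simp add: power_mult power_mod)
    also have "\<dots> = 1" unfolding ga using lagrange[OF KC finK K0 Kcl uK u0] cardK by simp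
    also have "\<dots> = g ^ 0 mod \<psi>" using one_mod by simp
    finally have "(a * (p ^ d - 1)) mod N = 0 mod N" using gf(3) by metis
    hence "N dvd a * (p ^ d - 1)" by (simp add: mod_eq_0_iff_dvd)
    then obtain t where t: "a * (p ^ d - 1) = N * t" by (elim dvdE)
    define D where "D = int z - int b"
    have pd: "p ^ d \<ge> 1" "p ^ n \<ge> 1" using p2 by simp_all
    have "D * (int p ^ d - 1) = int N * (int t + s * (int p ^ d - 1))"
    proof -
      have "int (a * (p ^ d - 1)) = int (N * t)" using t by simp
      hence "int a * (int p ^ d - 1) = int N * int t" using pd by (simp add: of_nat_diff)
      thus ?thesis unfolding D_def s by (simp add: algebra_simps)
    qed
    hence eqc: "(of_int D :: complex) * (of_nat p ^ d - 1) = (of_nat p ^ n - 1) * of_int (int t + s * (int p ^ d - 1))"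
    proof -
      assume h: "D * (int p ^ d - 1) = int N * (int t + s * (int p ^ d - 1))"
      have "of_int (D * (int p ^ d - 1)) = (of_int (int N * (int t + s * (int p ^ d - 1))) :: complex)"
        using h by simp
      moreover have "(of_nat N :: complex) = of_nat p ^ n - 1" using NC pd by (simp add: of_nat_diff)
      ultimately show ?thesis by simp
    qed
    obtain r where r: "r \<in> \<int>" "(of_nat p ^ n - 1 :: complex) = (of_nat p ^ d - 1) * (poly (cyclotomic_poly n) (of_nat p) * r)"
      using cyc_eval[OF assms(10) _ assms(12), of p] assms(11) by auto
    define \<Phi> where "\<Phi> = poly (cyclotomic_poly n) (of_nat p :: complex)"
    have nz: "(of_nat p ^ d - 1 :: complex) \<noteq> 0"
    proof
      assume "(of_nat p ^ d - 1 :: complex) = 0"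
      hence "(of_nat (p ^ d) :: complex) = of_nat 1" by simp
      hence "p ^ d = 1" by (simp only: of_nat_eq_iff)
      moreover have "p ^ d > 1" using p2 assms(11) by (intro one_less_power) auto
      ultimately show False by (metis less_irrefl)
    qed
    define k :: complex where "k = of_int (int t + s * (int p ^ d - 1))"
    define Q :: complex where "Q = of_nat p ^ d - 1"
    have "(of_int D :: complex) * Q = (Q * (\<Phi> * r)) * k"
      using eqc unfolding k_def Q_def \<Phi>_def r(2) .
    hence "Q * (of_int D :: complex) = Q * (\<Phi> * (r * k))" by (simp only: mult_ac)
    hence "(of_int D :: complex) = \<Phi> * (r * k)" using nz unfolding Q_def by simp
    hence "(of_int D :: complex) = \<Phi> * (r * of_int (int t + s * (int p ^ d - 1)))"
      unfolding k_def .
    hence "(of_int D :: complex) / \<Phi> \<in> \<int>"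
      using r(1) by (cases "\<Phi> = 0") (auto intro!: Ints_mult)
    thus "(of_int (int (dlog \<psi> g (P mod \<psi>)) - int (dlog \<psi> g T)) / poly (cyclotomic_poly n) (of_nat p) :: complex) \<in> \<int>"
      unfolding D_def z_def b_def \<Phi>_def by simp
  qed
qed

end
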